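(* In the two-cut setting of the context, let $v,z\in\mathbb C$ with $v\ne z$, $v,z$ not poles of $h$ and not in $\mathcal L$. Let $\Omega_k,\Omega^{\varepsilon}_k$ denote the integrals below with all $u_\alpha$-contours equal to $\Gamma(\mathcal L)$ (enclosing $\mathcal L$ but not $v$, $z$ or other poles of $h$), and let $\Omega^{(v)}_k,\Omega^{\varepsilon(v)}_k$ denote the same integrals with all $u_\alpha$-contours equal to a contour $\Gamma^{(v)}(\mathcal L)$ enclosing $\mathcal L\cup\{v\}$ but not $z$ or other poles of $h$. Then $$\Omega_r(v,z)=\Omega^{(v)}_r(v,z)+r(z-v)h(v)\,\Omega^{+1}_{r-1}(v,z),$$ $$\Omega^{-1}_{r+1}(v,z)=\Omega^{-1(v)}_{r+1}(v,z)+(r+1)\frac{h(v)}{z-v}\,\Omega_r(z,v).$$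
   Context: Two-cut hexagon: integers $b,c,d\ge1$, $m_1,m_2,n_1,n_2\ge1$ with $m_1+m_2=n_1+n_2$, $N=b+c$, $r=b-d\ge0$, $\rho=n_1-m_1+b-d\ge0$, $\Sigma=m_1-n_1+c-d\ge0$. With $(a)_k=a(a+1)\cdots(a+k-1)$, $(a)_0=1$, and $x_1=m_1+m_2-1$, $x_{c+1}=n_1-c-1$, $x_{c+d}=n_1-c-d$, $x_{c+d+1}=-c-d-1$, $y_d=m_1-d$: $Q_{\mathcal L}(z)=(z-x_{c+d+1})_b$, $Q_{\mathcal R}(z)=(z-x_1)_c$, $P_\rho(z)=(z-x_{c+d}+1)_\rho$, $P_\Sigma(z)=(z-y_d+1)_\Sigma$, and $h(u)=\frac{Q_{\mathcal R}(u)}{P_\rho(u)P_\Sigma(u)Q_{\mathcal L}(u)}$. $\mathcal L=\{-d-N,\dots,-d-c-1\}$ is the root set of $Q_{\mathcal L}$. With $\Delta_k(u)=\prod_{i<j}(u_i-u_j)$ and contours $\Gamma$ for the $u_\alpha$: $\Omega_k(v,z)=\bigl(\prod_{\alpha=1}^k\oint_\Gamma\frac{du_\alpha h(u_\alpha)}{2\pi i}\frac{z-u_\alpha}{v-u_\alpha}\bigr)\Delta_k^2(u)$, $\Omega^{\varepsilon}_k(v,z)=\bigl(\prod_{\alpha=1}^k\oint_\Gamma\frac{du_\alpha h(u_\alpha)}{2\pi i}(v-u_\alpha)^\varepsilon(z-u_\alpha)^\varepsilon\bigr)\Delta_k^2(u)$ for $\varepsilon=\pm1$ (empty products and $\Delta_0$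 equal $1$). *)

theory Defs
  imports "HOL-Complex_Analysis.Complex_Analysis"
begin

text \<open>Two-cut hexagon data. Parameters: b c d m1 m2 n1 (n2 only enters via m1+m2=n1+n2).\<close>

definition rho_tc :: "nat \<Rightarrow> nat \<Rightarrow> nat \<Rightarrow> nat \<Rightarrow> int" where
  "rho_tc b d m1 n1 = int n1 - int m1 + int b - int d"

definition Sigma_tc :: "nat \<Rightarrow> nat \<Rightarrow> nat \<Rightarrow> nat \<Rightarrow> int" where
  "Sigma_tc c d m1 n1 = int m1 - int n1 + int c - int d"

text \<open>Q_L(z) = (z - x_{c+d+1})_b with x_{c+d+1} = -c-d-1\<close>
definition QL :: "nat \<Rightarrow> nat \<Rightarrow> nat \<Rightarrow> complex \<Rightarrow> complex" where
  "QL b c d z = pochhammer (z - (- of_nat c - of_nat d - 1)) b"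

text \<open>Q_R(z) = (z - x_1)_c with x_1 = m1+m2-1\<close>
definition QR :: "nat \<Rightarrow> nat \<Rightarrow> nat \<Rightarrow> complex \<Rightarrow> complex" where
  "QR c m1 m2 z = pochhammer (z - (of_nat m1 + of_nat m2 - 1)) c"

text \<open>P_rho(z) = (z - x_{c+d} + 1)_rho with x_{c+d} = n1-c-d\<close>
definition Prho :: "nat \<Rightarrow> nat \<Rightarrow> nat \<Rightarrow> nat \<Rightarrow> nat \<Rightarrow> complex \<Rightarrow> complex" where
  "Prho b c d m1 n1 z = pochhammer (z - (of_nat n1 - of_nat c - of_nat d) + 1) (nat (rho_tc b d m1 n1))"

text \<open>P_Sigma(z) = (z - y_d + 1)_Sigma with y_d = m1-d\<close>
definition PSigma :: "nat \<Rightarrow> nat \<Rightarrow> nat \<Rightarrow> nat \<Rightarrow> complex \<Rightarrow> complex" where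
  "PSigma c d m1 n1 z = pochhammer (z - (of_nat m1 - of_nat d) + 1) (nat (Sigma_tc c d m1 n1))"

definition h_raw :: "nat \<Rightarrow> nat \<Rightarrow> nat \<Rightarrow> nat \<Rightarrow> nat \<Rightarrow> nat \<Rightarrow> complex \<Rightarrow> complex" where
  "h_raw b c d m1 m2 n1 u =
     QR c m1 m2 u / (Prho b c d m1 n1 u * PSigma c d m1 n1 u * QL b c d u)"

text \<open>h as a rational function: at zeros of the denominator (possibly cancelled
  by zeros of the numerator) take the limit, so h is the reduced rational function.\<close>
definition h_tc :: "nat \<Rightarrow> nat \<Rightarrow> nat \<Rightarrow> nat \<Rightarrow> nat \<Rightarrow> nat \<Rightarrow> complex \<Rightarrow> complex" where
  "h_tc b c d m1 m2 n1 u =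
     (if Prho b c d m1 n1 u * PSigma c d m1 n1 u * QL b c d u \<noteq> 0
      then h_raw b c d m1 m2 n1 u
      else Lim (at u) (h_raw b c d m1 m2 n1))"

definition poles_tc :: "nat \<Rightarrow> nat \<Rightarrow> nat \<Rightarrow> nat \<Rightarrow> nat \<Rightarrow> nat \<Rightarrow> complex set" where
  "poles_tc b c d m1 m2 n1 = {u. is_pole (h_tc b c d m1 m2 n1) u}"

text \<open>L = {-d-N, ..., -d-c-1}, N = b+c.\<close>
definition L_tc :: "nat \<Rightarrow> nat \<Rightarrow> nat \<Rightarrow> complex set" where
  "L_tc b c d = {of_int k | k. - int d - int b - int c \<le> k \<and> k \<le> - int d - int c - 1}"

definition Delta :: "nat \<Rightarrow> (nat \<Rightarrow> complex) \<Rightarrow> complex" where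
  "Delta k u = (\<Prod>i<k. \<Prod>j\<in>{i<..<k}. (u i - u j))"

fun iter_ci :: "(real \<Rightarrow> complex) \<Rightarrow> nat \<Rightarrow> ((nat \<Rightarrow> complex) \<Rightarrow> complex) \<Rightarrow> complex" where
  "iter_ci \<gamma> 0 F = F (\<lambda>_. 0)"
| "iter_ci \<gamma> (Suc k) F = contour_integral \<gamma> (\<lambda>w. iter_ci \<gamma> k (\<lambda>u. F (u(k := w))))"

definition Omega :: "(complex \<Rightarrow> complex) \<Rightarrow> (real \<Rightarrow> complex) \<Rightarrow> nat \<Rightarrow> complex \<Rightarrow> complex \<Rightarrow> complex" where
  "Omega h \<gamma> k v z = iter_ci \<gamma> k (\<lambda>u.
     (\<Prod>\<alpha><k. h (u \<alpha>) / (2 * pi * \<i>) * ((z - u \<alpha>) / (v - u \<alpha>))) * (Delta k u)\<^sup>2)"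

definition OmegaE :: "(complex \<Rightarrow> complex) \<Rightarrow> (real \<Rightarrow> complex) \<Rightarrow> int \<Rightarrow> nat \<Rightarrow> complex \<Rightarrow> complex \<Rightarrow> complex" where
  "OmegaE h \<gamma> \<epsilon> k v z = iter_ci \<gamma> k (\<lambda>u.
     (\<Prod>\<alpha><k. h (u \<alpha>) / (2 * pi * \<i>) * ((v - u \<alpha>) powi \<epsilon>) * ((z - u \<alpha>) powi \<epsilon>)) * (Delta k u)\<^sup>2)"

end

theory Submission
  imports Defs
begin

fun iter_gen :: "(nat \<Rightarrow> (complex \<Rightarrow> complex) \<Rightarrow> complex) \<Rightarrow> nat \<Rightarrow> ((nat \<Rightarrow> complex) \<Rightarrow> complex) \<Rightarrow> complex" where
  "iter_gen L 0 F = F (\<lambda>_. 0)"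
| "iter_gen L (Suc k) F = L k (\<lambda>w. iter_gen L k (\<lambda>u. F (u(k := w))))"

definition Ent :: "(complex \<Rightarrow> complex) set" where
  "Ent = {g. g holomorphic_on UNIV}"

definition lin :: "((complex \<Rightarrow> complex) \<Rightarrow> complex) \<Rightarrow> bool" where
  "lin L \<longleftrightarrow> (\<forall>f g. f \<in> Ent \<longrightarrow> g \<in> Ent \<longrightarrow> L (\<lambda>w. f w + g w) = L f + L g) \<and>
             (\<forall>c f. f \<in> Ent \<longrightarrow> L (\<lambda>w. c * f w) = c * L f)"

definition hom :: "((complex \<Rightarrow> complex) \<Rightarrow> complex) \<Rightarrow> bool" where
  "hom L \<longleftrightarrow> (\<forall>c f. L (\<lambda>w. c * f w) = c * L f)"

lemma Ent_sum: "finite I \<Longrightarrow> (\<forall>i\<in>I. g i \<in> Ent) \<Longrightarrow> (\<lambda>w. \<Sum>i\<in>I. d i * g i w) \<in> Ent"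
  unfolding Ent_def by (auto intro!: holomorphic_intros)

lemma lin_sum:
  assumes "lin L" "finite I" "\<forall>i\<in>I. g i \<in> Ent"
  shows "L (\<lambda>w. \<Sum>i\<in>I. d i * g i w) = (\<Sum>i\<in>I. d i * L (g i))"
  using assms(2,3)
proof (induction I rule: finite_induct)
  case empty
  have "(\<lambda>_. 0 :: complex) \<in> Ent" unfolding Ent_def by auto
  hence "L (\<lambda>w. 0 * (\<lambda>_. 0) w) = 0 * L (\<lambda>_. 0)" using assms(1) unfolding lin_def by blast
  thus ?case by simp
next
  case (insert x F)
  have e1: "(\<lambda>w. d x * g x w) \<in> Ent" using insert unfolding Ent_def by (auto intro!: holomorphic_intros)
  have e2: "(\<lambda>w. \<Sum>i\<in>F. d i * g i w) \<in> Ent" using insert by (intro Ent_sum) auto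
  have "L (\<lambda>w. \<Sum>i\<in>insert x F. d i * g i w) = L (\<lambda>w. (\<lambda>w. d x * g x w) w + (\<lambda>w. \<Sum>i\<in>F. d i * g i w) w)"
    using insert by simp
  also have "\<dots> = L (\<lambda>w. d x * g x w) + L (\<lambda>w. \<Sum>i\<in>F. d i * g i w)"
    using assms(1) e1 e2 unfolding lin_def by blast
  also have "L (\<lambda>w. d x * g x w) = d x * L (g x)" using assms(1) insert unfolding lin_def by auto
  finally show ?case using insert by simp
qed

lemma iter_gen_sep:
  assumes "finite I" "\<forall>\<alpha><k. lin (L \<alpha>)" "\<forall>i\<in>I. \<forall>\<alpha><k. f i \<alpha> \<in> Ent"
  shows "iter_gen L k (\<lambda>u. \<Sum>i\<in>I. c i * (\<Prod>\<alpha><k. f i \<alpha> (u \<alpha>))) = (\<Sum>i\<in>I. c i * (\<Prod>\<alpha><k. L \<alpha> (f i \<alpha>)))"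
  using assms(2,3)
proof (induction k arbitrary: c)
  case 0
  then show ?case by simp
next
  case (Suc k)
  have eq: "(\<lambda>w. iter_gen L k (\<lambda>u. \<Sum>i\<in>I. c i * (\<Prod>\<alpha><Suc k. f i \<alpha> ((u(k := w)) \<alpha>))))
      = (\<lambda>w. \<Sum>i\<in>I. (c i * (\<Prod>\<alpha><k. L \<alpha> (f i \<alpha>))) * f i k w)"
  proof
    fix w
    have "(\<lambda>u. \<Sum>i\<in>I. c i * (\<Prod>\<alpha><Suc k. f i \<alpha> ((u(k := w)) \<alpha>)))
        = (\<lambda>u. \<Sum>i\<in>I. (c i * f i k w) * (\<Prod>\<alpha><k. f i \<alpha> (u \<alpha>)))"
      by (auto simp: mult_ac intro!: sum.cong prod.cong)
    hence "iter_gen L k (\<lambda>u. \<Sum>i\<in>I. c i * (\<Prod>\<alpha><Suc k. f i \<alpha> ((u(k := w)) \<alpha>)))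
       = (\<Sum>i\<in>I. (c i * f i k w) * (\<Prod>\<alpha><k. L \<alpha> (f i \<alpha>)))"
      using Suc by simp
    thus "iter_gen L k (\<lambda>u. \<Sum>i\<in>I. c i * (\<Prod>\<alpha><Suc k. f i \<alpha> ((u(k := w)) \<alpha>))) =
          (\<Sum>i\<in>I. (c i * (\<Prod>\<alpha><k. L \<alpha> (f i \<alpha>))) * f i k w)"
      by (simp add: mult_ac)
  qed
  have "iter_gen L (Suc k) (\<lambda>u. \<Sum>i\<in>I. c i * (\<Prod>\<alpha><Suc k. f i \<alpha> (u \<alpha>)))
     = L k (\<lambda>w. \<Sum>i\<in>I. (c i * (\<Prod>\<alpha><k. L \<alpha> (f i \<alpha>))) * f i k w)"
    using eq by simp
  also have "\<dots> = (\<Sum>i\<in>I. (c i * (\<Prod>\<alpha><k. L \<alpha> (f i \<alpha>))) * L k (f i k))"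
    using Suc.prems assms(1) by (intro lin_sum) auto
  finally show ?case by (simp add: mult_ac)
qed

lemma iter_gen_cong:
  "(\<And>\<alpha>. \<alpha> < k \<Longrightarrow> L \<alpha> = L' \<alpha>) \<Longrightarrow> iter_gen L k F = iter_gen L' k F"
  by (induction k arbitrary: F) auto

lemma iter_gen_hom:
  assumes "\<forall>\<alpha><k. hom (L \<alpha>)"
  shows "iter_gen L k (\<lambda>u. c * F u) = c * iter_gen L k F"
  using assms
proof (induction k arbitrary: F)
  case 0 then show ?case by simp
next
  case (Suc k)
  have "iter_gen L (Suc k) (\<lambda>u. c * F u) = L k (\<lambda>w. c * iter_gen L k (\<lambda>u. F (u(k := w))))"
    using Suc by simp
  also have "\<dots> = c * iter_gen L (Suc k) F" using Suc.prems unfolding hom_def by simp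
  finally show ?case .
qed

lemma iter_gen_absorb:
  assumes "\<forall>\<alpha><k. hom (L \<alpha>)"
  shows "iter_gen L k (\<lambda>u. (\<Prod>\<alpha><k. m (u \<alpha>)) * G u) = iter_gen (\<lambda>\<alpha> q. L \<alpha> (\<lambda>w. m w * q w)) k G"
  using assms
proof (induction k arbitrary: G)
  case 0 then show ?case by simp
next
  case (Suc k)
  have h': "\<forall>\<alpha><k. hom ((\<lambda>\<alpha> q. L \<alpha> (\<lambda>w. m w * q w)) \<alpha>)"
    using Suc.prems unfolding hom_def by (auto simp: mult_ac)
  have "iter_gen L (Suc k) (\<lambda>u. (\<Prod>\<alpha><Suc k. m (u \<alpha>)) * G u)
      = L k (\<lambda>w. iter_gen L k (\<lambda>u. (\<Prod>\<alpha><k. m (u \<alpha>)) * (m w * G (u(k := w)))))"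
    by (simp add: mult_ac)
  also have "\<dots> = L k (\<lambda>w. iter_gen (\<lambda>\<alpha> q. L \<alpha> (\<lambda>w. m w * q w)) k (\<lambda>u. m w * G (u(k := w))))"
    using Suc by simp
  also have "\<dots> = L k (\<lambda>w. m w * iter_gen (\<lambda>\<alpha> q. L \<alpha> (\<lambda>w. m w * q w)) k (\<lambda>u. G (u(k := w))))"
    using iter_gen_hom[OF h'] by simp
  also have "\<dots> = iter_gen (\<lambda>\<alpha> q. L \<alpha> (\<lambda>w. m w * q w)) (Suc k) G" by simp
  finally show ?case .
qed

lemma iter_ci_gen: "iter_ci \<gamma> k F = iter_gen (\<lambda>_. contour_integral \<gamma>) k F"
  by (induction k arbitrary: F) auto

definition Pk :: "nat \<Rightarrow> (nat \<times> nat) set" where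
  "Pk k = {(i,j). i < j \<and> j < k}"

lemma finite_Pk: "finite (Pk k)"
  unfolding Pk_def by (rule finite_subset[of _ "{..<k} \<times> {..<k}"]) auto

lemma Delta_Pk: "Delta k u = (\<Prod>p\<in>Pk k. u (fst p) - u (snd p))"
proof -
  have "Pk k = Sigma {..<k} (\<lambda>i. {i<..<k})" unfolding Pk_def by auto
  thus ?thesis unfolding Delta_def by (simp add: prod.Sigma case_prod_beta)
qed

lemma Delta_Suc: "Delta (Suc m) u = Delta m u * (\<Prod>i<m. u i - u m)"
proof -
  have a: "\<And>i. i < m \<Longrightarrow> {i<..<Suc m} = insert m {i<..<m}" by auto
  have b: "{m<..<Suc m} = {}" by auto
  have "Delta (Suc m) u = (\<Prod>i<m. \<Prod>j\<in>{i<..<Suc m}. u i - u j)"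
    unfolding Delta_def by (simp add: b)
  also have "\<dots> = (\<Prod>i<m. (u i - u m) * (\<Prod>j\<in>{i<..<m}. u i - u j))"
    by (intro prod.cong refl) (simp add: a)
  finally show ?thesis unfolding Delta_def by (simp add: prod.distrib mult_ac)
qed

lemma Delta_upd: "Delta m (u(m := v)) = Delta m u"
  unfolding Delta_def by (intro prod.cong refl) auto

lemma D_Suc_upd: "(Delta (Suc m) (u(m := v)))\<^sup>2 = (\<Prod>\<alpha><m. (u \<alpha> - v)\<^sup>2) * (Delta m u)\<^sup>2"
  unfolding Delta_Suc Delta_upd by (simp add: power_mult_distrib prod_power_distrib)

lemma D_zero:
  assumes "b1 \<in> S" "b2 \<in> S" "b1 \<noteq> b2" "b1 < k" "b2 < k"
  shows "(Delta k (\<lambda>\<alpha>. if \<alpha> \<in> S then v else u \<alpha>))\<^sup>2 = 0"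
proof -
  define i where "i = min b1 b2"
  define j where "j = max b1 b2"
  have "(i,j) \<in> Pk k" using assms unfolding Pk_def i_def j_def by auto
  moreover have "i \<in> S" "j \<in> S" using assms unfolding i_def j_def by (auto simp: min_def max_def)
  ultimately show ?thesis unfolding Delta_Pk
    by (auto intro!: prod_zero finite_Pk bexI[of _ "(i,j)"])
qed

lemma D_perm:
  assumes "bij_betw \<sigma> {..<k} {..<k}"
  shows "(Delta k (u \<circ> \<sigma>))\<^sup>2 = (Delta k u)\<^sup>2"
proof -
  define Q where "Q = {(i,j). i < k \<and> j < k \<and> i \<noteq> j}"
  have Q: "\<And>u. (\<Prod>p\<in>Q. u (fst p) - u (snd p)) = (-1) ^ card (Pk k) * (Delta k u)\<^sup>2"
  proof -
    fix u :: "nat \<Rightarrow> complex"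
    have QU: "Q = Pk k \<union> (\<lambda>(i,j). (j,i)) ` Pk k" unfolding Q_def Pk_def by auto
    have dis: "Pk k \<inter> (\<lambda>(i,j). (j,i)) ` Pk k = {}" unfolding Pk_def by auto
    have inj: "inj_on (\<lambda>(i,j). (j,i)) (Pk k)" by (auto simp: inj_on_def)
    have "(\<Prod>p\<in>Q. u (fst p) - u (snd p)) = (\<Prod>p\<in>Pk k. u (fst p) - u (snd p)) *
           (\<Prod>p\<in>(\<lambda>(i,j). (j,i)) ` Pk k. u (fst p) - u (snd p))"
      unfolding QU by (rule prod.union_disjoint) (auto simp: finite_Pk dis)
    also have "(\<Prod>p\<in>(\<lambda>(i,j). (j,i)) ` Pk k. u (fst p) - u (snd p)) = (\<Prod>p\<in>Pk k. - (u (fst p) - u (snd p)))"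
      by (subst prod.reindex[OF inj]) (auto intro!: prod.cong)
    also have "\<dots> = (-1) ^ card (Pk k) * (\<Prod>p\<in>Pk k. u (fst p) - u (snd p))"
    proof -
      have "(\<Prod>p\<in>Pk k. - (u (fst p) - u (snd p))) = (\<Prod>p\<in>Pk k. (-1) * (u (fst p) - u (snd p)))" by simp
      also have "\<dots> = (-1) ^ card (Pk k) * (\<Prod>p\<in>Pk k. u (fst p) - u (snd p))"
        by (simp only: prod.distrib prod_constant)
      finally show ?thesis .
    qed
    finally show "(\<Prod>p\<in>Q. u (fst p) - u (snd p)) = (-1) ^ card (Pk k) * (Delta k u)\<^sup>2"
      unfolding Delta_Pk by (simp add: power2_eq_square mult_ac)
  qed
  have bj: "bij_betw (\<lambda>(i,j). (\<sigma> i, \<sigma> j)) Q Q"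
  proof -
    have inj: "inj_on \<sigma> {..<k}" and im: "\<sigma> ` {..<k} = {..<k}" using assms by (auto simp: bij_betw_def)
    show ?thesis unfolding bij_betw_def
    proof
      show "inj_on (\<lambda>(i,j). (\<sigma> i, \<sigma> j)) Q" using inj unfolding Q_def inj_on_def by auto
      show "(\<lambda>(i,j). (\<sigma> i, \<sigma> j)) ` Q = Q"
      proof
        show "(\<lambda>(i,j). (\<sigma> i, \<sigma> j)) ` Q \<subseteq> Q" using inj im unfolding Q_def inj_on_def by auto
        show "Q \<subseteq> (\<lambda>(i,j). (\<sigma> i, \<sigma> j)) ` Q"
        proof
          fix p assume "p \<in> Q"
          then obtain i j where p: "p = (i,j)" "i < k" "j < k" "i \<noteq> j" unfolding Q_def by auto
          obtain i' where "i' < k" "\<sigma> i' = i" using im p by (metis imageE lessThan_iff)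
          moreover obtain j' where "j' < k" "\<sigma> j' = j" using im p by (metis imageE lessThan_iff)
          ultimately show "p \<in> (\<lambda>(i,j). (\<sigma> i, \<sigma> j)) ` Q" using p unfolding Q_def
            by (auto intro!: image_eqI[of _ _ "(i',j')"])
        qed
      qed
    qed
  qed
  have "(\<Prod>p\<in>Q. (u \<circ> \<sigma>) (fst p) - (u \<circ> \<sigma>) (snd p)) = (\<Prod>p\<in>Q. u (fst p) - u (snd p))"
    using prod.reindex_bij_betw[OF bj, of "\<lambda>p. u (fst p) - u (snd p)"]
    by (simp add: case_prod_beta)
  hence "(-1) ^ card (Pk k) * (Delta k (u \<circ> \<sigma>))\<^sup>2 = (-1) ^ card (Pk k) * (Delta k u)\<^sup>2"
    unfolding Q by simp
  thus ?thesis by simp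
qed

definition mm :: "nat \<times> nat \<Rightarrow> nat \<Rightarrow> nat \<Rightarrow> complex \<Rightarrow> complex" where
  "mm p t \<alpha> y = y ^ ((if \<alpha> = fst p then 2 - t else 0) + (if \<alpha> = snd p then t else 0))"

definition cc :: "nat \<Rightarrow> complex" where
  "cc t = (if t = 1 then -2 else 1)"

lemma prod_pow_delta:
  fixes a k :: nat
  assumes "a < k"
  shows "(\<Prod>\<alpha><k. (f \<alpha> :: complex) ^ (if \<alpha> = a then n else 0)) = f a ^ n"
proof -
  have "(\<lambda>\<alpha>. f \<alpha> ^ (if \<alpha> = a then n else 0)) = (\<lambda>\<alpha>. if \<alpha> = a then f \<alpha> ^ n else 1)" by auto
  hence "(\<Prod>\<alpha><k. f \<alpha> ^ (if \<alpha> = a then n else 0)) = (\<Prod>\<alpha><k. if \<alpha> = a then f \<alpha> ^ n else 1)"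
    by (simp only:)
  also have "\<dots> = f a ^ n" using assms by (subst prod.delta) auto
  finally show ?thesis .
qed

lemma D_rep:
  "(Delta k u)\<^sup>2 = (\<Sum>x\<in>PiE (Pk k) (\<lambda>_. {0,1,2}). (\<Prod>p\<in>Pk k. cc (x p)) *
        (\<Prod>\<alpha><k. (\<lambda>y. \<Prod>p\<in>Pk k. mm p (x p) \<alpha> y) (u \<alpha>)))"
proof -
  have t: "\<And>p. p \<in> Pk k \<Longrightarrow> (u (fst p) - u (snd p))\<^sup>2 =
        (\<Sum>t\<in>{0,1,2}. cc t * (\<Prod>\<alpha><k. mm p t \<alpha> (u \<alpha>)))"
  proof -
    fix p assume p: "p \<in> Pk k"
    hence lt: "fst p < k" "snd p < k" "fst p \<noteq> snd p" unfolding Pk_def by auto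
    have e: "\<And>t. (\<Prod>\<alpha><k. mm p t \<alpha> (u \<alpha>)) = u (fst p) ^ (2 - t) * u (snd p) ^ t"
      unfolding mm_def power_add prod.distrib using lt by (simp add: prod_pow_delta)
    show "(u (fst p) - u (snd p))\<^sup>2 = (\<Sum>t\<in>{0,1,2}. cc t * (\<Prod>\<alpha><k. mm p t \<alpha> (u \<alpha>)))"
      unfolding e by (simp add: cc_def power2_eq_square algebra_simps)
  qed
  have "(Delta k u)\<^sup>2 = (\<Prod>p\<in>Pk k. (u (fst p) - u (snd p))\<^sup>2)"
    unfolding Delta_Pk by (simp add: prod_power_distrib)
  also have "\<dots> = (\<Prod>p\<in>Pk k. \<Sum>t\<in>{0,1,2}. cc t * (\<Prod>\<alpha><k. mm p t \<alpha> (u \<alpha>)))"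
    using t by (rule prod.cong[OF refl])
  also have "\<dots> = (\<Sum>x\<in>PiE (Pk k) (\<lambda>_. {0,1,2}). \<Prod>p\<in>Pk k. cc (x p) * (\<Prod>\<alpha><k. mm p (x p) \<alpha> (u \<alpha>)))"
    by (rule prod_sum_PiE) (auto simp: finite_Pk)
  also have "\<dots> = (\<Sum>x\<in>PiE (Pk k) (\<lambda>_. {0,1,2}). (\<Prod>p\<in>Pk k. cc (x p)) *
        (\<Prod>\<alpha><k. (\<lambda>y. \<Prod>p\<in>Pk k. mm p (x p) \<alpha> y) (u \<alpha>)))"
    by (intro sum.cong refl) (simp add: prod.distrib prod.swap[of _ "Pk k" "{..<k}"])
  finally show ?thesis .
qed

lemma D_rep_ex:
  "\<exists>I c f. finite I \<and> (\<forall>i\<in>I. \<forall>\<alpha>. f i \<alpha> \<in> Ent) \<and>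
     (\<forall>u. (Delta k u)\<^sup>2 = (\<Sum>i\<in>(I :: (nat\<times>nat \<Rightarrow> nat) set). c i * (\<Prod>\<alpha><k. f i \<alpha> (u \<alpha>))))"
proof (intro exI conjI allI ballI)
  show "finite (PiE (Pk k) (\<lambda>_. {0::nat,1,2}))" by (auto intro!: finite_PiE simp: finite_Pk)
  show "\<And>u. (Delta k u)\<^sup>2 = (\<Sum>x\<in>PiE (Pk k) (\<lambda>_. {0,1,2}). (\<lambda>x. \<Prod>p\<in>Pk k. cc (x p)) x *
        (\<Prod>\<alpha><k. (\<lambda>x \<alpha> y. \<Prod>p\<in>Pk k. mm p (x p) \<alpha> y) x \<alpha> (u \<alpha>)))"
    by (rule D_rep)
  show "\<And>i \<alpha>. (\<lambda>x \<alpha> y. \<Prod>p\<in>Pk k. mm p (x p) \<alpha> y) i \<alpha> \<in> Ent"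
    unfolding Ent_def mm_def by (auto intro!: holomorphic_intros)
qed

lemma iter_gen_zero: "\<forall>\<alpha><k. lin (L \<alpha>) \<Longrightarrow> iter_gen L k (\<lambda>u. 0) = 0"
  using iter_gen_sep[of "{} :: nat set" k L] by simp

lemma lin_eval: "lin (\<lambda>g. g v)"
  unfolding lin_def by simp

lemma lin_wt:
  assumes "lin A" "wt \<in> Ent"
  shows "lin (\<lambda>q. A (\<lambda>w. wt w * q w))"
proof -
  have E: "\<And>f. f \<in> Ent \<Longrightarrow> (\<lambda>w. wt w * f w) \<in> Ent" using assms(2) unfolding Ent_def
    by (auto intro!: holomorphic_intros)
  show ?thesis unfolding lin_def
  proof (intro conjI allI impI)
    fix f g assume fg: "f \<in> Ent" "g \<in> Ent"
    have "A (\<lambda>w. wt w * (f w + g w)) = A (\<lambda>w. (\<lambda>w. wt w * f w) w + (\<lambda>w. wt w * g w) w)"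
      by (simp add: algebra_simps)
    also have "\<dots> = A (\<lambda>w. wt w * f w) + A (\<lambda>w. wt w * g w)"
      using assms(1) E fg unfolding lin_def by blast
    finally show "A (\<lambda>w. wt w * (f w + g w)) = A (\<lambda>w. wt w * f w) + A (\<lambda>w. wt w * g w)" .
  next
    fix c f assume f: "f \<in> Ent"
    have "A (\<lambda>w. wt w * (c * f w)) = A (\<lambda>w. c * (\<lambda>w. wt w * f w) w)" by (simp add: algebra_simps)
    also have "\<dots> = c * A (\<lambda>w. wt w * f w)" using assms(1) E f unfolding lin_def by blast
    finally show "A (\<lambda>w. wt w * (c * f w)) = c * A (\<lambda>w. wt w * f w)" .
  qed
qed

lemma iter_gen_D_cong:
  assumes "\<forall>\<alpha><k. lin (L1 \<alpha>)" "\<forall>\<alpha><k. lin (L2 \<alpha>)" "\<forall>\<alpha><k. \<forall>q\<in>Ent. L1 \<alpha> q = L2 \<alpha> q"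
  shows "iter_gen L1 k (\<lambda>u. (Delta k u)\<^sup>2) = iter_gen L2 k (\<lambda>u. (Delta k u)\<^sup>2)"
proof -
  obtain I c f where fin: "finite (I :: (nat\<times>nat \<Rightarrow> nat) set)" and ent: "\<forall>i\<in>I. \<forall>\<alpha>. f i \<alpha> \<in> Ent"
    and rep: "\<forall>u. (Delta k u)\<^sup>2 = (\<Sum>i\<in>I. c i * (\<Prod>\<alpha><k. f i \<alpha> (u \<alpha>)))"
    using D_rep_ex[of k] by blast
  have Dk: "(\<lambda>u. (Delta k u)\<^sup>2) = (\<lambda>u. \<Sum>i\<in>I. c i * (\<Prod>\<alpha><k. f i \<alpha> (u \<alpha>)))"
    using rep by auto
  show ?thesis unfolding Dk
    using assms fin ent by (simp add: iter_gen_sep)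
qed

lemma expansion:
  fixes L A Bm :: "(complex \<Rightarrow> complex) \<Rightarrow> complex" and K v :: complex
  assumes linL: "lin L" and linA: "lin A" and linB: "lin Bm" and homA: "hom A"
    and LA: "\<forall>q\<in>Ent. L q = A q + K * q v"
    and AB: "\<forall>q\<in>Ent. A (\<lambda>w. (w - v)\<^sup>2 * q w) = Bm q"
  shows "iter_gen (\<lambda>_. L) (Suc m) (\<lambda>u. (Delta (Suc m) u)\<^sup>2)
       = iter_gen (\<lambda>_. A) (Suc m) (\<lambda>u. (Delta (Suc m) u)\<^sup>2)
         + of_nat (Suc m) * K * iter_gen (\<lambda>_. Bm) m (\<lambda>u. (Delta m u)\<^sup>2)"
proof -
  define k where "k = Suc m"
  obtain I c f where fin: "finite (I :: (nat\<times>nat \<Rightarrow> nat) set)" and ent: "\<forall>i\<in>I. \<forall>\<alpha>. f i \<alpha> \<in> Ent"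
    and rep: "\<forall>u. (Delta k u)\<^sup>2 = (\<Sum>i\<in>I. c i * (\<Prod>\<alpha><k. f i \<alpha> (u \<alpha>)))"
    using D_rep_ex[of k] by blast
  have Dk: "(\<lambda>u. (Delta k u)\<^sup>2) = (\<lambda>u. \<Sum>i\<in>I. c i * (\<Prod>\<alpha><k. f i \<alpha> (u \<alpha>)))"
    using rep by auto
  define M where "M S = (\<lambda>\<alpha>. if \<alpha> \<in> S then (\<lambda>g::complex\<Rightarrow>complex. g v) else A)" for S :: "nat set"
  have Mapp: "\<And>S \<alpha> g. M S \<alpha> g = (if \<alpha> \<in> S then g v else A g)" unfolding M_def by simp
  have linM: "\<And>S. \<forall>\<alpha><k. lin (M S \<alpha>)" unfolding M_def using linA lin_eval by auto
  define W where "W S = (\<Sum>i\<in>I. c i * (\<Prod>\<alpha><k. M S \<alpha> (f i \<alpha>)))" for S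
  have WS: "\<And>S. iter_gen (M S) k (\<lambda>u. (Delta k u)\<^sup>2) = W S"
    unfolding Dk W_def using linM fin ent by (simp add: iter_gen_sep)
  have step1: "iter_gen (\<lambda>_. L) k (\<lambda>u. (Delta k u)\<^sup>2) = (\<Sum>S\<in>Pow {..<k}. K ^ card S * W S)"
  proof -
    have "iter_gen (\<lambda>_. L) k (\<lambda>u. (Delta k u)\<^sup>2) = (\<Sum>i\<in>I. c i * (\<Prod>\<alpha><k. L (f i \<alpha>)))"
      unfolding Dk using linL fin ent by (simp add: iter_gen_sep)
    also have "\<dots> = (\<Sum>i\<in>I. c i * (\<Prod>\<alpha><k. K * f i \<alpha> v + A (f i \<alpha>)))"
      using LA ent by (intro sum.cong refl arg_cong2[where f="(*)"] prod.cong) (auto simp: add_ac)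
    also have "\<dots> = (\<Sum>i\<in>I. c i * (\<Sum>S\<in>Pow {..<k}. (\<Prod>\<alpha>\<in>S. K * f i \<alpha> v) * (\<Prod>\<alpha>\<in>{..<k}-S. A (f i \<alpha>))))"
      by (simp add: prod_add)
    also have "\<dots> = (\<Sum>i\<in>I. \<Sum>S\<in>Pow {..<k}. c i * (K ^ card S * (\<Prod>\<alpha><k. M S \<alpha> (f i \<alpha>))))"
    proof (intro sum.cong refl, unfold sum_distrib_left, intro sum.cong refl)
      fix i S assume S: "S \<in> Pow {..<k}"
      have "(\<Prod>\<alpha><k. M S \<alpha> (f i \<alpha>)) = (\<Prod>\<alpha><k. if \<alpha> \<in> S then f i \<alpha> v else A (f i \<alpha>))"
        by (simp add: Mapp)
      also have "\<dots> = (\<Prod>\<alpha>\<in>{..<k} \<inter> {\<alpha>. \<alpha> \<in> S}. f i \<alpha> v) * (\<Prod>\<alpha>\<in>{..<k} \<inter> - {\<alpha>. \<alpha> \<in> S}. A (f i \<alpha>))"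
        by (rule prod.If_cases) simp
      also have "{..<k} \<inter> {\<alpha>. \<alpha> \<in> S} = S" using S by auto
      also have "{..<k} \<inter> - {\<alpha>. \<alpha> \<in> S} = {..<k} - S" by auto
      finally have e: "(\<Prod>\<alpha><k. M S \<alpha> (f i \<alpha>)) = (\<Prod>\<alpha>\<in>S. f i \<alpha> v) * (\<Prod>\<alpha>\<in>{..<k} - S. A (f i \<alpha>))" .
      have "(\<Prod>\<alpha>\<in>S. K * f i \<alpha> v) = K ^ card S * (\<Prod>\<alpha>\<in>S. f i \<alpha> v)"
        by (simp add: prod.distrib)
      then show "c i * ((\<Prod>\<alpha>\<in>S. K * f i \<alpha> v) * (\<Prod>\<alpha>\<in>{..<k} - S. A (f i \<alpha>))) =
          c i * (K ^ card S * (\<Prod>\<alpha><k. M S \<alpha> (f i \<alpha>)))"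
        unfolding e by (simp add: mult_ac)
    qed
    also have "\<dots> = (\<Sum>S\<in>Pow {..<k}. K ^ card S * W S)"
      unfolding W_def by (subst sum.swap) (simp add: sum_distrib_left mult_ac)
    finally show ?thesis .
  qed
  have W0: "W {} = iter_gen (\<lambda>_. A) k (\<lambda>u. (Delta k u)\<^sup>2)"
  proof -
    have "M {} = (\<lambda>_. A)" unfolding M_def by auto
    thus ?thesis using WS[of "{}"] by simp
  qed
  have W2: "W S = 0" if S: "S \<subseteq> {..<k}" "b1 \<in> S" "b2 \<in> S" "b1 \<noteq> b2" for S b1 b2
  proof -
    define f' where "f' i \<alpha> = (if \<alpha> \<in> S then (\<lambda>_. f i \<alpha> v) else f i \<alpha>)" for i \<alpha>
    have ent': "\<forall>i\<in>I. \<forall>\<alpha><k. f' i \<alpha> \<in> Ent" using ent unfolding f'_def Ent_def by auto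
    have "iter_gen (M S) k (\<lambda>u. \<Sum>i\<in>I. c i * (\<Prod>\<alpha><k. f' i \<alpha> (u \<alpha>))) = (\<Sum>i\<in>I. c i * (\<Prod>\<alpha><k. M S \<alpha> (f' i \<alpha>)))"
      using linM fin ent' by (simp add: iter_gen_sep)
    also have "\<dots> = W S" unfolding W_def f'_def by (intro sum.cong refl arg_cong2[where f="(*)"] prod.cong) (auto simp: Mapp)
    finally have a: "iter_gen (M S) k (\<lambda>u. \<Sum>i\<in>I. c i * (\<Prod>\<alpha><k. f' i \<alpha> (u \<alpha>))) = W S" .
    have "(\<lambda>u. \<Sum>i\<in>I. c i * (\<Prod>\<alpha><k. f' i \<alpha> (u \<alpha>))) = (\<lambda>u. (Delta k (\<lambda>\<alpha>. if \<alpha> \<in> S then v else u \<alpha>))\<^sup>2)"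
      unfolding rep[rule_format] f'_def by (intro ext sum.cong refl arg_cong2[where f="(*)"] prod.cong) auto
    also have "\<dots> = (\<lambda>u. 0)"
    proof
      fix u
      have "b1 < k" "b2 < k" using S by auto
      thus "(Delta k (\<lambda>\<alpha>. if \<alpha> \<in> S then v else u \<alpha>))\<^sup>2 = 0" using D_zero[of b1 S b2 k v u] S by auto
    qed
    finally show ?thesis using a iter_gen_zero[OF linM] by simp
  qed
  have W1: "W {\<beta>} = W {m}" if \<beta>: "\<beta> < k" for \<beta>
  proof -
    define \<sigma> where "\<sigma> \<alpha> = (if \<alpha> = \<beta> then m else if \<alpha> = m then \<beta> else \<alpha>)" for \<alpha>
    have ss: "\<And>\<alpha>. \<sigma> (\<sigma> \<alpha>) = \<alpha>" unfolding \<sigma>_def by auto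
    have bj: "bij_betw \<sigma> {..<k} {..<k}"
    proof (rule bij_betwI[where g=\<sigma>])
      show "\<sigma> \<in> {..<k} \<rightarrow> {..<k}" using \<beta> unfolding \<sigma>_def k_def by auto
      show "\<sigma> \<in> {..<k} \<rightarrow> {..<k}" using \<beta> unfolding \<sigma>_def k_def by auto
    qed (auto simp: ss)
    have reidx: "\<And>h. (\<Prod>\<alpha><k. h (\<sigma> \<alpha>)) = (\<Prod>\<alpha><k. (h \<alpha> :: complex))"
      using bj by (rule prod.reindex_bij_betw)
    define g where "g i \<alpha> = f i (\<sigma> \<alpha>)" for i \<alpha>
    have entg: "\<forall>i\<in>I. \<forall>\<alpha><k. g i \<alpha> \<in> Ent" using ent unfolding g_def by auto
    have funeq: "(\<lambda>u. \<Sum>i\<in>I. c i * (\<Prod>\<alpha><k. g i \<alpha> (u \<alpha>))) = (\<lambda>u. (Delta k u)\<^sup>2)"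
    proof
      fix u
      have "(Delta k u)\<^sup>2 = (Delta k (u \<circ> \<sigma>))\<^sup>2" using D_perm[OF bj] by simp
      also have "\<dots> = (\<Sum>i\<in>I. c i * (\<Prod>\<alpha><k. f i \<alpha> (u (\<sigma> \<alpha>))))" using rep by simp
      also have "\<dots> = (\<Sum>i\<in>I. c i * (\<Prod>\<alpha><k. g i \<alpha> (u \<alpha>)))"
      proof (intro sum.cong refl arg_cong2[where f="(*)"])
        fix i
        have "(\<Prod>\<alpha><k. f i \<alpha> (u (\<sigma> \<alpha>))) = (\<Prod>\<alpha><k. f i (\<sigma> \<alpha>) (u (\<sigma> (\<sigma> \<alpha>))))"
          using reidx[of "\<lambda>\<alpha>. f i \<alpha> (u (\<sigma> \<alpha>))"] by simp
        thus "(\<Prod>\<alpha><k. f i \<alpha> (u (\<sigma> \<alpha>))) = (\<Prod>\<alpha><k. g i \<alpha> (u \<alpha>))" unfolding g_def ss .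
      qed
      finally show "(\<Sum>i\<in>I. c i * (\<Prod>\<alpha><k. g i \<alpha> (u \<alpha>))) = (Delta k u)\<^sup>2" by simp
    qed
    have "W {\<beta>} = iter_gen (M {\<beta>}) k (\<lambda>u. (Delta k u)\<^sup>2)" using WS by simp
    also have "\<dots> = (\<Sum>i\<in>I. c i * (\<Prod>\<alpha><k. M {\<beta>} \<alpha> (g i \<alpha>)))"
      unfolding funeq[symmetric] using linM fin entg by (simp add: iter_gen_sep)
    also have "\<dots> = W {m}" unfolding W_def
    proof (intro sum.cong refl arg_cong2[where f="(*)"])
      fix i
      have "(\<Prod>\<alpha><k. M {\<beta>} \<alpha> (g i \<alpha>)) = (\<Prod>\<alpha><k. M {\<beta>} (\<sigma> \<alpha>) (g i (\<sigma> \<alpha>)))"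
        using reidx[of "\<lambda>\<alpha>. M {\<beta>} \<alpha> (g i \<alpha>)"] by simp
      also have "\<dots> = (\<Prod>\<alpha><k. M {m} \<alpha> (f i \<alpha>))"
        unfolding g_def ss by (intro prod.cong refl) (auto simp: M_def \<sigma>_def)
      finally show "(\<Prod>\<alpha><k. M {\<beta>} \<alpha> (g i \<alpha>)) = (\<Prod>\<alpha><k. M {m} \<alpha> (f i \<alpha>))" .
    qed
    finally show ?thesis .
  qed
  have Wm: "W {m} = iter_gen (\<lambda>_. Bm) m (\<lambda>u. (Delta m u)\<^sup>2)"
  proof -
    have "W {m} = (\<Sum>i\<in>I. (c i * f i m v) * (\<Prod>\<alpha><m. A (f i \<alpha>)))"
      unfolding W_def k_def by (intro sum.cong refl) (simp add: Mapp mult_ac)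
    also have "\<dots> = iter_gen (\<lambda>_. A) m (\<lambda>u. \<Sum>i\<in>I. (c i * f i m v) * (\<Prod>\<alpha><m. f i \<alpha> (u \<alpha>)))"
      using linA fin ent by (subst iter_gen_sep[where c="\<lambda>i. c i * f i m v"]) auto
    also have "(\<lambda>u. \<Sum>i\<in>I. (c i * f i m v) * (\<Prod>\<alpha><m. f i \<alpha> (u \<alpha>))) = (\<lambda>u. (Delta k (u(m := v)))\<^sup>2)"
    proof
      fix u
      have "(Delta k (u(m := v)))\<^sup>2 = (\<Sum>i\<in>I. c i * (\<Prod>\<alpha><Suc m. f i \<alpha> ((u(m := v)) \<alpha>)))"
        using rep unfolding k_def by blast
      also have "\<dots> = (\<Sum>i\<in>I. (c i * f i m v) * (\<Prod>\<alpha><m. f i \<alpha> (u \<alpha>)))"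
        by (intro sum.cong refl) (simp add: mult_ac)
      finally show "(\<Sum>i\<in>I. (c i * f i m v) * (\<Prod>\<alpha><m. f i \<alpha> (u \<alpha>))) = (Delta k (u(m := v)))\<^sup>2" by simp
    qed
    also have "\<dots> = (\<lambda>u. (\<Prod>\<alpha><m. (\<lambda>y. (y - v)\<^sup>2) (u \<alpha>)) * (Delta m u)\<^sup>2)"
      unfolding k_def D_Suc_upd by simp
    also have "iter_gen (\<lambda>_. A) m \<dots> = iter_gen (\<lambda>_ q. A (\<lambda>w. (w - v)\<^sup>2 * q w)) m (\<lambda>u. (Delta m u)\<^sup>2)"
      using homA by (subst iter_gen_absorb) auto
    also have "\<dots> = iter_gen (\<lambda>_. Bm) m (\<lambda>u. (Delta m u)\<^sup>2)"
    proof (rule iter_gen_D_cong)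
      have "(\<lambda>w. (w - v)\<^sup>2) \<in> Ent" unfolding Ent_def by (auto intro!: holomorphic_intros)
      thus "\<forall>\<alpha><m. lin ((\<lambda>_ q. A (\<lambda>w. (w - v)\<^sup>2 * q w)) \<alpha>)" using lin_wt[OF linA] by simp
    qed (use linB AB in auto)
    finally show ?thesis .
  qed
  define P1 where "P1 = (\<lambda>\<beta>. {\<beta>}) ` {..<k}"
  have sub: "{{}} \<union> P1 \<subseteq> Pow {..<k}" unfolding P1_def by auto
  have z: "\<forall>S\<in>Pow {..<k} - ({{}} \<union> P1). K ^ card S * W S = 0"
  proof
    fix S assume S: "S \<in> Pow {..<k} - ({{}} \<union> P1)"
    then obtain b1 where b1: "b1 \<in> S" by auto
    have "S \<noteq> {b1}" using S b1 unfolding P1_def by auto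
    then obtain b2 where "b2 \<in> S" "b2 \<noteq> b1" using b1 by auto
    thus "K ^ card S * W S = 0" using W2[of S b1 b2] S b1 by auto
  qed
  have "(\<Sum>S\<in>Pow {..<k}. K ^ card S * W S) = (\<Sum>S\<in>{{}} \<union> P1. K ^ card S * W S)"
    by (rule sum.mono_neutral_right[symmetric, OF _ sub z, symmetric]) simp
  also have "\<dots> = W {} + (\<Sum>S\<in>P1. K ^ card S * W S)"
    by (subst sum.union_disjoint) (auto simp: P1_def)
  also have "(\<Sum>S\<in>P1. K ^ card S * W S) = (\<Sum>\<beta><k. K * W {\<beta>})"
    unfolding P1_def by (subst sum.reindex) (auto simp: inj_on_def)
  also have "\<dots> = (\<Sum>\<beta><k. K * W {m})" using W1 by auto
  also have "\<dots> = of_nat k * K * W {m}" by simp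
  finally show ?thesis using step1 W0 Wm unfolding k_def by simp
qed

lemma rat_facts:
  fixes N Dn ht :: "complex \<Rightarrow> complex"
  assumes N: "N holomorphic_on UNIV" and Dh: "Dn holomorphic_on UNIV" and Zf: "finite {u. Dn u = 0}"
    and ht: "\<And>u. ht u = (if Dn u \<noteq> 0 then N u / Dn u else Lim (at u) (\<lambda>w. N w / Dn w))"
  shows "finite {u. is_pole ht u}" "ht holomorphic_on (- {u. is_pole ht u})"
proof -
  define Z where "Z = {u. Dn u = 0}"
  define hr where "hr = (\<lambda>w. N w / Dn w)"
  have oZ: "open (- Z)" using Zf unfolding Z_def by (simp add: finite_imp_closed open_Compl)
  have hrh: "hr holomorphic_on (- Z)" unfolding hr_def Z_def using N Dh
    by (auto intro!: holomorphic_intros elim: holomorphic_on_subset)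
  have eqZ: "\<And>w. w \<notin> Z \<Longrightarrow> ht w = hr w" using ht unfolding Z_def hr_def by auto
  have ev: "\<And>u. eventually (\<lambda>w. ht w = hr w) (at u)"
  proof -
    fix u
    have "\<not> u islimpt Z" using Zf unfolding Z_def by (rule islimpt_finite)
    hence "eventually (\<lambda>y. y \<notin> Z) (at u)" by (simp add: islimpt_iff_eventually)
    thus "eventually (\<lambda>w. ht w = hr w) (at u)" by eventually_elim (use eqZ in auto)
  qed
  have pe: "\<And>u. is_pole ht u \<longleftrightarrow> is_pole hr u" using ev by (intro is_pole_cong) auto
  have PZ: "{u. is_pole ht u} \<subseteq> Z"
  proof
    fix u assume "u \<in> {u. is_pole ht u}"
    hence "is_pole hr u" using pe by auto
    thus "u \<in> Z" using not_is_pole_holomorphic[OF oZ _ hrh] by auto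
  qed
  show fP: "finite {u. is_pole ht u}" using PZ Zf finite_subset unfolding Z_def by blast
  show "ht holomorphic_on (- {u. is_pole ht u})"
  proof (rule no_isolated_singularity'[where K = "Z - {u. is_pole ht u}"])
    show "open (- {u. is_pole ht u})" using fP by (simp add: finite_imp_closed open_Compl)
    show "finite (Z - {u. is_pole ht u})" using Zf unfolding Z_def by simp
    have "- {u. is_pole ht u} - (Z - {u. is_pole ht u}) = - Z" using PZ by auto
    moreover have "ht holomorphic_on (- Z)"
      using hrh by (rule holomorphic_transform) (use eqZ in auto)
    ultimately show "ht holomorphic_on (- {u. is_pole ht u} - (Z - {u. is_pole ht u}))" by simp
  next
    fix z assume z: "z \<in> Z - {u. is_pole ht u}"
    have nz: "Dn z = 0" using z unfolding Z_def by auto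
    have "not_essential hr z" unfolding hr_def
    proof (rule not_essential_divide)
      show "not_essential N z" "not_essential Dn z" using N Dh by (auto intro: not_essential_holomorphic)
      show "isolated_singularity_at N z" "isolated_singularity_at Dn z"
        using N Dh by (auto intro!: isolated_singularity_at_holomorphic[of _ UNIV] elim: holomorphic_on_subset)
    qed
    moreover have "\<not> is_pole hr z" using z pe by auto
    ultimately obtain x where x: "hr \<midarrow>z\<rightarrow> x" unfolding not_essential_def by auto
    have hz: "ht z = x" using ht[of z] nz x unfolding hr_def by (simp add: tendsto_Lim)
    have "ht \<midarrow>z\<rightarrow> x" using x ev[of z] by (simp add: tendsto_cong)
    thus "(ht \<longlongrightarrow> ht z) (at z within - {u. is_pole ht u})" unfolding hz
      by (rule tendsto_mono[OF at_le, rotated]) simp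
  qed
qed

lemma poch_holo: "g holomorphic_on S \<Longrightarrow> (\<lambda>u. pochhammer (g u :: complex) n) holomorphic_on S"
  unfolding pochhammer_prod by (auto intro!: holomorphic_intros)

lemma poch_zeros_finite: "finite {u::complex. pochhammer (u + a) n = 0}"
proof -
  have "{u::complex. pochhammer (u + a) n = 0} \<subseteq> (\<lambda>k. - of_nat k - a) ` {..<n}"
    by (auto simp: pochhammer_eq_0_iff algebra_simps)
  thus ?thesis by (rule finite_subset) simp
qed

lemma h_facts:
  "finite (poles_tc b c d m1 m2 n1)" "h_tc b c d m1 m2 n1 holomorphic_on (- poles_tc b c d m1 m2 n1)"
proof -
  define Dn where "Dn = (\<lambda>u. Prho b c d m1 n1 u * PSigma c d m1 n1 u * QL b c d u)"
  have Dh: "Dn holomorphic_on UNIV" unfolding Dn_def Prho_def PSigma_def QL_def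
    by (intro holomorphic_intros poch_holo)
  have Nh: "QR c m1 m2 holomorphic_on UNIV" unfolding QR_def
    by (intro holomorphic_intros poch_holo)
  have e1: "\<And>u. Prho b c d m1 n1 u = pochhammer (u + (1 - (of_nat n1 - of_nat c - of_nat d))) (nat (rho_tc b d m1 n1))"
    unfolding Prho_def by (simp add: algebra_simps)
  have e2: "\<And>u. PSigma c d m1 n1 u = pochhammer (u + (1 - (of_nat m1 - of_nat d))) (nat (Sigma_tc c d m1 n1))"
    unfolding PSigma_def by (simp add: algebra_simps)
  have e3: "\<And>u. QL b c d u = pochhammer (u + (of_nat c + of_nat d + 1)) b"
    unfolding QL_def by (simp add: algebra_simps)
  have "{u. Dn u = 0} \<subseteq> {u. pochhammer (u + (1 - (of_nat n1 - of_nat c - of_nat d))) (nat (rho_tc b d m1 n1)) = 0}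
      \<union> {u. pochhammer (u + (1 - (of_nat m1 - of_nat d))) (nat (Sigma_tc c d m1 n1)) = 0}
      \<union> {u. pochhammer (u + (of_nat c + of_nat d + 1)) b = 0}"
    unfolding Dn_def e1 e2 e3 by auto
  hence Zf: "finite {u. Dn u = 0}" by (rule finite_subset) (simp add: poch_zeros_finite)
  have ht: "\<And>u. h_tc b c d m1 m2 n1 u = (if Dn u \<noteq> 0 then QR c m1 m2 u / Dn u else Lim (at u) (\<lambda>w. QR c m1 m2 w / Dn w))"
    unfolding h_tc_def h_raw_def Dn_def by simp
  note r = rat_facts[OF Nh Dh Zf ht]
  show "finite (poles_tc b c d m1 m2 n1)" "h_tc b c d m1 m2 n1 holomorphic_on (- poles_tc b c d m1 m2 n1)"
    using r unfolding poles_tc_def by auto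
qed

lemma hom_ci: "hom (\<lambda>q. contour_integral \<gamma> (\<lambda>w. \<phi> w * q w))"
  unfolding hom_def
proof (intro allI)
  fix c and q :: "complex \<Rightarrow> complex"
  define F where "F = (\<lambda>w. \<phi> w * q w)"
  have e: "(\<lambda>w. \<phi> w * (c * q w)) = (\<lambda>w. c * F w)" unfolding F_def by (auto simp: mult_ac)
  have "contour_integral \<gamma> (\<lambda>w. c * F w) = c * contour_integral \<gamma> F"
  proof (cases "F contour_integrable_on \<gamma>")
    case True then show ?thesis by (rule contour_integral_lmul)
  next
    case False
    show ?thesis
    proof (cases "c = 0")
      case True then show ?thesis by simp
    next
      case c: False
      have "\<not> (\<lambda>w. c * F w) contour_integrable_on \<gamma>"
      proof
        assume "(\<lambda>w. c * F w) contour_integrable_on \<gamma>"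
        hence "(\<lambda>w. inverse c * (c * F w)) contour_integrable_on \<gamma>" by (rule contour_integrable_lmul)
        moreover have "(\<lambda>w. inverse c * (c * F w)) = F" using c by (auto simp: field_simps)
        ultimately show False using False by simp
      qed
      thus ?thesis using False by (simp add: not_integrable_contour_integral)
    qed
  qed
  thus "contour_integral \<gamma> (\<lambda>w. \<phi> w * (c * q w)) = c * contour_integral \<gamma> (\<lambda>w. \<phi> w * q w)"
    using e unfolding F_def by simp
qed

lemma hom_ci1: "hom (contour_integral \<gamma>)"
  using hom_ci[of \<gamma> "\<lambda>_. 1"] by simp

lemma lin_ci:
  assumes "valid_path \<gamma>" "open U" "path_image \<gamma> \<subseteq> U" "\<phi> holomorphic_on U"
  shows "lin (\<lambda>q. contour_integral \<gamma> (\<lambda>w. \<phi> w * q w))"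
proof -
  have I: "\<And>f. f \<in> Ent \<Longrightarrow> (\<lambda>w. \<phi> w * f w) contour_integrable_on \<gamma>"
    using assms unfolding Ent_def
    by (intro contour_integrable_holomorphic_simple[of _ U]) (auto intro!: holomorphic_intros elim: holomorphic_on_subset)
  show ?thesis unfolding lin_def
  proof (intro conjI allI impI)
    fix f g assume fg: "f \<in> Ent" "g \<in> Ent"
    have "(\<lambda>w. \<phi> w * (f w + g w)) = (\<lambda>w. \<phi> w * f w + \<phi> w * g w)" by (simp add: algebra_simps)
    thus "contour_integral \<gamma> (\<lambda>w. \<phi> w * (f w + g w)) = contour_integral \<gamma> (\<lambda>w. \<phi> w * f w) + contour_integral \<gamma> (\<lambda>w. \<phi> w * g w)"
      using contour_integral_add[OF I[OF fg(1)] I[OF fg(2)]] by simp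
  next
    fix c f
    show "contour_integral \<gamma> (\<lambda>w. \<phi> w * (c * f w)) = c * contour_integral \<gamma> (\<lambda>w. \<phi> w * f w)"
      using hom_ci unfolding hom_def by blast
  qed
qed

lemma iter_ci_absorb:
  "iter_ci \<gamma> k (\<lambda>u. (\<Prod>\<alpha><k. \<phi> (u \<alpha>)) * G u) = iter_gen (\<lambda>_ q. contour_integral \<gamma> (\<lambda>w. \<phi> w * q w)) k G"
  unfolding iter_ci_gen using hom_ci1 by (subst iter_gen_absorb) auto

lemma a1: fixes H c v w z q :: complex
  shows "H / c * inverse (v - w) * inverse (z - w) * q = - (H * q / (z - w) / c) / (w - v)"
proof -
  have "inverse (v - w) = - inverse (w - v)" by (metis inverse_minus_eq minus_diff_eq)
  thus ?thesis unfolding divide_inverse by (simp only: mult_ac mult_minus_left mult_minus_right)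
qed
lemma a2: fixes H c v z q :: complex assumes "c \<noteq> 0"
  shows "- c * (- (H * q / (z - v) / c)) = H / (z - v) * q"
  using assms by (simp add: divide_inverse mult_ac)
lemma a3: fixes H c v w z q :: complex assumes "w \<noteq> v"
  shows "H / c * inverse (v - w) * inverse (z - w) * ((w - v)\<^sup>2 * q) = H / c * ((v - w) / (z - w)) * q"
proof -
  have "(w - v)\<^sup>2 = (v - w) * (v - w)" by (simp add: power2_eq_square algebra_simps)
  moreover have "inverse (v - w) * (v - w) = 1" using assms by simp
  ultimately show ?thesis unfolding divide_inverse by (simp only: mult_ac) (simp add: mult.assoc[symmetric])
qed

locale setting =
  fixes H :: "complex \<Rightarrow> complex" and Pl Ls :: "complex set" and v z :: complex and \<gamma> \<gamma>v :: "real \<Rightarrow> complex"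
  assumes finP: "finite Pl" and holH: "H holomorphic_on (- Pl)"
    and vz: "v \<noteq> z" "v \<notin> Pl" "z \<notin> Pl" "v \<notin> Ls"
    and \<gamma>: "valid_path \<gamma>" "pathfinish \<gamma> = pathstart \<gamma>"
        "path_image \<gamma> \<inter> (Pl \<union> {v, z}) = {}"
        "\<forall>p\<in>Ls. winding_number \<gamma> p = 1"
        "winding_number \<gamma> v = 0" "winding_number \<gamma> z = 0"
        "\<forall>p\<in>Pl - Ls. winding_number \<gamma> p = 0"
    and \<gamma>v: "valid_path \<gamma>v" "pathfinish \<gamma>v = pathstart \<gamma>v"
        "path_image \<gamma>v \<inter> (Pl \<union> {v, z}) = {}"
        "\<forall>p\<in>Ls. winding_number \<gamma>v p = 1"
        "winding_number \<gamma>v v = 1" "winding_number \<gamma>v z = 0"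
        "\<forall>p\<in>Pl - Ls. winding_number \<gamma>v p = 0"
begin

lemma res_thm:
  assumes "finite pts" "f holomorphic_on (UNIV - pts)" "g = \<gamma> \<or> g = \<gamma>v" "pts \<subseteq> Pl \<union> {v, z}"
  shows "contour_integral g f = 2 * pi * \<i> * (\<Sum>p\<in>pts. winding_number g p * residue f p)"
proof (rule Residue_theorem[of UNIV])
  show "valid_path g" "pathfinish g = pathstart g" using assms(3) \<gamma> \<gamma>v by auto
  show "path_image g \<subseteq> UNIV - pts" using assms(3,4) \<gamma> \<gamma>v by auto
qed (use assms in auto)

lemma R1:
  assumes G: "G holomorphic_on (- (Pl \<union> {z}))"
  shows "contour_integral \<gamma> (\<lambda>w. G w / (w - v)) = contour_integral \<gamma>v (\<lambda>w. G w / (w - v)) - 2 * pi * \<i> * G v"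
proof -
  define f where "f = (\<lambda>w. G w / (w - v))"
  define pts where "pts = Pl \<union> {v, z}"
  have fp: "finite pts" unfolding pts_def using finP by auto
  have fh: "f holomorphic_on (UNIV - pts)" unfolding f_def pts_def
    using G by (auto intro!: holomorphic_intros elim: holomorphic_on_subset)
  have a: "contour_integral \<gamma> f = 2 * pi * \<i> * (\<Sum>p\<in>pts. winding_number \<gamma> p * residue f p)"
    using res_thm[OF fp fh] unfolding pts_def by auto
  have b: "contour_integral \<gamma>v f = 2 * pi * \<i> * (\<Sum>p\<in>pts. winding_number \<gamma>v p * residue f p)"
    using res_thm[OF fp fh] unfolding pts_def by auto
  have "(\<Sum>p\<in>pts. winding_number \<gamma> p * residue f p) - (\<Sum>p\<in>pts. winding_number \<gamma>v p * residue f p)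
      = (\<Sum>p\<in>pts. (winding_number \<gamma> p - winding_number \<gamma>v p) * residue f p)"
    by (simp add: sum_subtractf algebra_simps)
  also have "\<dots> = (\<Sum>p\<in>pts. if p = v then - residue f v else 0)"
  proof (intro sum.cong refl)
    fix p assume p: "p \<in> pts"
    show "(winding_number \<gamma> p - winding_number \<gamma>v p) * residue f p = (if p = v then - residue f v else 0)"
    proof (cases "p = v")
      case True then show ?thesis using \<gamma>(5) \<gamma>v(5) by simp
    next
      case False
      hence "p = z \<or> (p \<in> Pl \<and> p \<in> Ls) \<or> p \<in> Pl - Ls" using p unfolding pts_def by auto
      hence "winding_number \<gamma> p = winding_number \<gamma>v p" using \<gamma> \<gamma>v by auto
      thus ?thesis using False by simp
    qed
  qed
  also have "\<dots> = - residue f v" using fp unfolding pts_def by (simp add: sum.delta)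
  also have "residue f v = G v" unfolding f_def
    by (rule residue_simple[of "- (Pl \<union> {z})"]) (use finP vz G in \<open>auto simp: finite_imp_closed open_Compl\<close>)
  finally have "(\<Sum>p\<in>pts. winding_number \<gamma> p * residue f p) = (\<Sum>p\<in>pts. winding_number \<gamma>v p * residue f p) - G v"
    by (simp add: algebra_simps)
  hence "contour_integral \<gamma> f = 2 * pi * \<i> * ((\<Sum>p\<in>pts. winding_number \<gamma>v p * residue f p) - G v)"
    using a by simp
  also have "\<dots> = contour_integral \<gamma>v f - 2 * pi * \<i> * G v" using b by (simp add: right_diff_distrib)
  finally show ?thesis unfolding f_def .
qed

lemma R2:
  assumes G: "G holomorphic_on (- (Pl \<union> {z}))"
  shows "contour_integral \<gamma>v G = contour_integral \<gamma> G"
proof -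
  define pts where "pts = Pl \<union> {z}"
  have fp: "finite pts" unfolding pts_def using finP by auto
  have fh: "G holomorphic_on (UNIV - pts)" unfolding pts_def using G by (simp add: Compl_eq_Diff_UNIV)
  have a: "contour_integral \<gamma> G = 2 * pi * \<i> * (\<Sum>p\<in>pts. winding_number \<gamma> p * residue G p)"
    using res_thm[OF fp fh] unfolding pts_def by auto
  have b: "contour_integral \<gamma>v G = 2 * pi * \<i> * (\<Sum>p\<in>pts. winding_number \<gamma>v p * residue G p)"
    using res_thm[OF fp fh] unfolding pts_def by auto
  have "(\<Sum>p\<in>pts. winding_number \<gamma>v p * residue G p) = (\<Sum>p\<in>pts. winding_number \<gamma> p * residue G p)"
  proof (intro sum.cong refl)
    fix p assume p: "p \<in> pts"
    hence "p = z \<or> (p \<in> Pl \<and> p \<in> Ls) \<or> p \<in> Pl - Ls" unfolding pts_def by auto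
    hence "winding_number \<gamma> p = winding_number \<gamma>v p" using \<gamma> \<gamma>v by auto
    thus "winding_number \<gamma>v p * residue G p = winding_number \<gamma> p * residue G p" by simp
  qed
  thus ?thesis using a b by simp
qed

lemma open_U: "open (- (Pl \<union> {v, z}))" "open (- (Pl \<union> {z}))" "open (- Pl)"
  using finP by (auto simp: finite_imp_closed open_Compl)

definition "phi = (\<lambda>w. H w / (2 * pi * \<i>) * ((z - w) / (v - w)))"
definition "phip = (\<lambda>w. H w / (2 * pi * \<i>) * ((v - w) powi 1) * ((z - w) powi 1))"
definition "psi = (\<lambda>w. H w / (2 * pi * \<i>) * ((v - w) powi (-1)) * ((z - w) powi (-1)))"
definition "psip = (\<lambda>w. H w / (2 * pi * \<i>) * ((v - w) / (z - w)))"

lemma first: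
  "iter_gen (\<lambda>_ q. contour_integral \<gamma> (\<lambda>w. phi w * q w)) (Suc m) (\<lambda>u. (Delta (Suc m) u)\<^sup>2)
   = iter_gen (\<lambda>_ q. contour_integral \<gamma>v (\<lambda>w. phi w * q w)) (Suc m) (\<lambda>u. (Delta (Suc m) u)\<^sup>2)
     + of_nat (Suc m) * (H v * (z - v)) * iter_gen (\<lambda>_ q. contour_integral \<gamma> (\<lambda>w. phip w * q w)) m (\<lambda>u. (Delta m u)\<^sup>2)"
proof (rule expansion)
  have ph: "phi holomorphic_on (- (Pl \<union> {v, z}))" unfolding phi_def
    using holH by (auto intro!: holomorphic_intros elim: holomorphic_on_subset)
  show "lin (\<lambda>q. contour_integral \<gamma> (\<lambda>w. phi w * q w))"
    using \<gamma> by (intro lin_ci[OF _ open_U(1) _ ph]) auto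
  show "lin (\<lambda>q. contour_integral \<gamma>v (\<lambda>w. phi w * q w))"
    using \<gamma>v by (intro lin_ci[OF _ open_U(1) _ ph]) auto
  have pph: "phip holomorphic_on (- Pl)" unfolding phip_def
    using holH by (auto intro!: holomorphic_intros)
  show "lin (\<lambda>q. contour_integral \<gamma> (\<lambda>w. phip w * q w))"
    using \<gamma> by (intro lin_ci[OF _ open_U(3) _ pph]) auto
  show "hom (\<lambda>q. contour_integral \<gamma>v (\<lambda>w. phi w * q w))" by (rule hom_ci)
  show "\<forall>q\<in>Ent. contour_integral \<gamma> (\<lambda>w. phi w * q w) = contour_integral \<gamma>v (\<lambda>w. phi w * q w) + H v * (z - v) * q v"
  proof
    fix q assume q: "q \<in> Ent"
    define G where "G = (\<lambda>w. - (H w * (z - w) * q w / (2 * pi * \<i>)))"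
    have e: "(\<lambda>w. phi w * q w) = (\<lambda>w. G w / (w - v))"
    proof
      fix w
      have "(z - w) / (v - w) = - ((z - w) / (w - v))" by (metis minus_diff_eq minus_divide_right)
      thus "phi w * q w = G w / (w - v)" unfolding phi_def G_def by (simp add: field_simps)
    qed
    have Gh: "G holomorphic_on (- (Pl \<union> {z}))" unfolding G_def using holH q unfolding Ent_def
      by (auto intro!: holomorphic_intros elim: holomorphic_on_subset)
    show "contour_integral \<gamma> (\<lambda>w. phi w * q w) = contour_integral \<gamma>v (\<lambda>w. phi w * q w) + H v * (z - v) * q v"
      unfolding e R1[OF Gh] by (simp add: G_def)
  qed
  show "\<forall>q\<in>Ent. contour_integral \<gamma>v (\<lambda>w. phi w * ((w - v)\<^sup>2 * q w)) = contour_integral \<gamma> (\<lambda>w. phip w * q w)"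
  proof
    fix q assume q: "q \<in> Ent"
    have "contour_integral \<gamma>v (\<lambda>w. phi w * ((w - v)\<^sup>2 * q w)) = contour_integral \<gamma>v (\<lambda>w. phip w * q w)"
    proof (rule contour_integral_eq)
      fix w assume "w \<in> path_image \<gamma>v"
      hence "w \<noteq> v" using \<gamma>v(3) by auto
      thus "phi w * ((w - v)\<^sup>2 * q w) = phip w * q w" unfolding phi_def phip_def
        by (simp add: field_simps power2_eq_square)
    qed
    also have "\<dots> = contour_integral \<gamma> (\<lambda>w. phip w * q w)"
      by (rule R2) (use pph q in \<open>auto simp: Ent_def intro!: holomorphic_intros elim: holomorphic_on_subset\<close>)
    finally show "contour_integral \<gamma>v (\<lambda>w. phi w * ((w - v)\<^sup>2 * q w)) = contour_integral \<gamma> (\<lambda>w. phip w * q w)" .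
  qed
qed

lemma psi_eq: "psi = (\<lambda>w. H w / (2 * pi * \<i>) * inverse (v - w) * inverse (z - w))"
  unfolding psi_def by simp

lemma second:
  "iter_gen (\<lambda>_ q. contour_integral \<gamma> (\<lambda>w. psi w * q w)) (Suc m) (\<lambda>u. (Delta (Suc m) u)\<^sup>2)
   = iter_gen (\<lambda>_ q. contour_integral \<gamma>v (\<lambda>w. psi w * q w)) (Suc m) (\<lambda>u. (Delta (Suc m) u)\<^sup>2)
     + of_nat (Suc m) * (H v / (z - v)) * iter_gen (\<lambda>_ q. contour_integral \<gamma> (\<lambda>w. psip w * q w)) m (\<lambda>u. (Delta m u)\<^sup>2)"
proof (rule expansion)
  have ph: "psi holomorphic_on (- (Pl \<union> {v, z}))" unfolding psi_eq
    by (intro holomorphic_intros holomorphic_on_subset[OF holH]) auto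
  show "lin (\<lambda>q. contour_integral \<gamma> (\<lambda>w. psi w * q w))"
    using \<gamma> by (intro lin_ci[OF _ open_U(1) _ ph]) auto
  show "lin (\<lambda>q. contour_integral \<gamma>v (\<lambda>w. psi w * q w))"
    using \<gamma>v by (intro lin_ci[OF _ open_U(1) _ ph]) auto
  have pph: "psip holomorphic_on (- (Pl \<union> {z}))" unfolding psip_def
    by (intro holomorphic_intros holomorphic_on_subset[OF holH]) auto
  show "lin (\<lambda>q. contour_integral \<gamma> (\<lambda>w. psip w * q w))"
    using \<gamma> by (intro lin_ci[OF _ open_U(2) _ pph]) auto
  show "hom (\<lambda>q. contour_integral \<gamma>v (\<lambda>w. psi w * q w))" by (rule hom_ci)
  show "\<forall>q\<in>Ent. contour_integral \<gamma> (\<lambda>w. psi w * q w) = contour_integral \<gamma>v (\<lambda>w. psi w * q w) + H v / (z - v) * q v"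
  proof
    fix q assume q: "q \<in> Ent"
    define G where "G = (\<lambda>w. - (H w * q w / (z - w) / (2 * pi * \<i>)))"
    have e: "(\<lambda>w. psi w * q w) = (\<lambda>w. G w / (w - v))"
    proof
      fix w
      show "psi w * q w = G w / (w - v)" unfolding psi_eq G_def by (rule a1)
    qed
    have Gh: "G holomorphic_on (- (Pl \<union> {z}))" unfolding G_def
      using q unfolding Ent_def
      by (intro holomorphic_intros holomorphic_on_subset[OF holH]) (auto elim: holomorphic_on_subset)
    show "contour_integral \<gamma> (\<lambda>w. psi w * q w) = contour_integral \<gamma>v (\<lambda>w. psi w * q w) + H v / (z - v) * q v"
      unfolding e R1[OF Gh] using a2[of "2 * pi * \<i>" "H v" "q v" z v] by (simp add: G_def)
  qed
  show "\<forall>q\<in>Ent. contour_integral \<gamma>v (\<lambda>w. psi w * ((w - v)\<^sup>2 * q w)) = contour_integral \<gamma> (\<lambda>w. psip w * q w)"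
  proof
    fix q assume q: "q \<in> Ent"
    have "contour_integral \<gamma>v (\<lambda>w. psi w * ((w - v)\<^sup>2 * q w)) = contour_integral \<gamma>v (\<lambda>w. psip w * q w)"
    proof (rule contour_integral_eq)
      fix w assume "w \<in> path_image \<gamma>v"
      hence "w \<noteq> v" "w \<noteq> z" using \<gamma>v(3) by auto
      thus "psi w * ((w - v)\<^sup>2 * q w) = psip w * q w" unfolding psi_eq psip_def
        by (intro a3)
    qed
    also have "\<dots> = contour_integral \<gamma> (\<lambda>w. psip w * q w)"
      by (rule R2) (use pph q in \<open>auto simp: Ent_def intro!: holomorphic_intros elim: holomorphic_on_subset\<close>)
    finally show "contour_integral \<gamma>v (\<lambda>w. psi w * ((w - v)\<^sup>2 * q w)) = contour_integral \<gamma> (\<lambda>w. psip w * q w)" .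
  qed
qed

lemma Omega_conv:
  "Omega H g k v z = iter_gen (\<lambda>_ q. contour_integral g (\<lambda>w. phi w * q w)) k (\<lambda>u. (Delta k u)\<^sup>2)"
  "OmegaE H g 1 k v z = iter_gen (\<lambda>_ q. contour_integral g (\<lambda>w. phip w * q w)) k (\<lambda>u. (Delta k u)\<^sup>2)"
  "OmegaE H g (-1) k v z = iter_gen (\<lambda>_ q. contour_integral g (\<lambda>w. psi w * q w)) k (\<lambda>u. (Delta k u)\<^sup>2)"
  "Omega H g k z v = iter_gen (\<lambda>_ q. contour_integral g (\<lambda>w. psip w * q w)) k (\<lambda>u. (Delta k u)\<^sup>2)"
proof -
  show "Omega H g k v z = iter_gen (\<lambda>_ q. contour_integral g (\<lambda>w. phi w * q w)) k (\<lambda>u. (Delta k u)\<^sup>2)"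
    using iter_ci_absorb[of g k phi "\<lambda>u. (Delta k u)\<^sup>2"] unfolding Omega_def phi_def .
  show "OmegaE H g 1 k v z = iter_gen (\<lambda>_ q. contour_integral g (\<lambda>w. phip w * q w)) k (\<lambda>u. (Delta k u)\<^sup>2)"
    using iter_ci_absorb[of g k phip "\<lambda>u. (Delta k u)\<^sup>2"] unfolding OmegaE_def phip_def .
  show "OmegaE H g (-1) k v z = iter_gen (\<lambda>_ q. contour_integral g (\<lambda>w. psi w * q w)) k (\<lambda>u. (Delta k u)\<^sup>2)"
    using iter_ci_absorb[of g k psi "\<lambda>u. (Delta k u)\<^sup>2"] unfolding OmegaE_def psi_def .
  show "Omega H g k z v = iter_gen (\<lambda>_ q. contour_integral g (\<lambda>w. psip w * q w)) k (\<lambda>u. (Delta k u)\<^sup>2)"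
    using iter_ci_absorb[of g k psip "\<lambda>u. (Delta k u)\<^sup>2"] unfolding Omega_def psip_def .
qed

end

theorem lemma5p3:
  fixes b c d m1 m2 n1 n2 :: nat and v z :: complex and \<gamma> \<gamma>v :: "real \<Rightarrow> complex"
  assumes pos: "b \<ge> 1" "c \<ge> 1" "d \<ge> 1" "m1 \<ge> 1" "m2 \<ge> 1" "n1 \<ge> 1" "n2 \<ge> 1"
    and sum_eq: "m1 + m2 = n1 + n2"
    and r_nonneg: "d \<le> b"
    and rho_nonneg: "rho_tc b d m1 n1 \<ge> 0"
    and Sigma_nonneg: "Sigma_tc c d m1 n1 \<ge> 0"
    and vz: "v \<noteq> z" "v \<notin> poles_tc b c d m1 m2 n1" "z \<notin> poles_tc b c d m1 m2 n1"
            "v \<notin> L_tc b c d" "z \<notin> L_tc b c d"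
    and \<gamma>: "valid_path \<gamma>" "pathfinish \<gamma> = pathstart \<gamma>"
        "path_image \<gamma> \<inter> (poles_tc b c d m1 m2 n1 \<union> {v, z}) = {}"
        "\<forall>p\<in>L_tc b c d. winding_number \<gamma> p = 1"
        "winding_number \<gamma> v = 0" "winding_number \<gamma> z = 0"
        "\<forall>p\<in>poles_tc b c d m1 m2 n1 - L_tc b c d. winding_number \<gamma> p = 0"
    and \<gamma>v: "valid_path \<gamma>v" "pathfinish \<gamma>v = pathstart \<gamma>v"
        "path_image \<gamma>v \<inter> (poles_tc b c d m1 m2 n1 \<union> {v, z}) = {}"
        "\<forall>p\<in>L_tc b c d. winding_number \<gamma>v p = 1"
        "winding_number \<gamma>v v = 1" "winding_number \<gamma>v z = 0"
        "\<forall>p\<in>poles_tc b c d m1 m2 n1 - L_tc b c d. winding_number \<gamma>v p = 0"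
  shows "(Omega (h_tc b c d m1 m2 n1) \<gamma> (b - d) v z =
           Omega (h_tc b c d m1 m2 n1) \<gamma>v (b - d) v z
           + of_nat (b - d) * (z - v) * h_tc b c d m1 m2 n1 v
             * OmegaE (h_tc b c d m1 m2 n1) \<gamma> 1 (b - d - 1) v z) \<and>
         (OmegaE (h_tc b c d m1 m2 n1) \<gamma> (-1) (b - d + 1) v z =
           OmegaE (h_tc b c d m1 m2 n1) \<gamma>v (-1) (b - d + 1) v z
           + of_nat (b - d + 1) * h_tc b c d m1 m2 n1 v / (z - v)
             * Omega (h_tc b c d m1 m2 n1) \<gamma> (b - d) z v)"
proof -
  interpret S: setting "h_tc b c d m1 m2 n1" "poles_tc b c d m1 m2 n1" "L_tc b c d" v z \<gamma> \<gamma>v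
    using h_facts vz \<gamma> \<gamma>v by unfold_locales auto
  define H where "H = h_tc b c d m1 m2 n1"
  define r where "r = b - d"
  have part1: "Omega H \<gamma> r v z = Omega H \<gamma>v r v z + of_nat r * (z - v) * H v * OmegaE H \<gamma> 1 (r - 1) v z"
  proof (cases r)
    case 0 then show ?thesis by (simp add: Omega_def)
  next
    case (Suc m)
    show ?thesis using S.first[of m] unfolding Suc H_def S.Omega_conv by (simp add: mult_ac)
  qed
  have part2: "OmegaE H \<gamma> (-1) (r + 1) v z = OmegaE H \<gamma>v (-1) (r + 1) v z + of_nat (r + 1) * H v / (z - v) * Omega H \<gamma> r z v"
    using S.second[of r] unfolding H_def S.Omega_conv by (simp add: mult_ac)
  show ?thesis using part1 part2 unfolding H_def r_def by (intro conjI)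
qed

end
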